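(* Let $\rho>0$, let $f\colon\mathbb{R}^d\to\mathbb{R}$ be $\rho$-weakly convex, let $r\colon\mathbb{R}^d\to\mathbb{R}\cup\{+\infty\}$ be a proper closed convex function, and $\varphi=f+r$. Suppose: (A1) one can generate i.i.d. realizations $\xi_0,\xi_1,\ldots\sim P$ from a probability space $(\Omega,\mathcal{F},P)$; (A2) there is an open set $U\supseteq\mathrm{dom}\,r$ and a measurable map $G\colon U\times\Omega\to\mathbb{R}^d$ with $\mathbb{E}_\xi[G(x,\xi)]\in\partial f(x)$ for all $x\in U$; (A3) there is $L\ge0$ with $\mathbb{E}_\xi\|G(x,\xi)\|^2\le L^2$ for all $x\in\mathrm{dom}\,r$. Let $x_0\in\mathrm{dom}\,r$ and $x_{t+1}=\mathrm{prox}_{\alpha_t r}\big(x_t-\alpha_tG(x_t,\xi_t)\big)$ for $t\ge0$. Fix $\bar\rho\in(\rho,2\rho]$ and suppose $\alpha_t\in(0,1/\bar\rho]$ for all $t\ge0$. Let $\hat x_t=\operatorname{argmin}_y\{\varphi(y)+\frac{\bar\rho}{2}\|y-x_t\|^2\}$. Then for every $t\ge 0$, $$\mathbb{E}_t\|x_{t+1}-\hat x_t\|^2\le\|x_t-\hat x_t\|^2+4\alpha_t^2L^2-2\alpha_t(\bar\rho-\rho)\|x_t-\hat x_t\|^2.$$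
   Context: For $\varphi\colon\mathbb{R}^d\to\mathbb{R}\cup\{+\infty\}$ and $x$ with $\varphi(x)$ finite, the subdifferential $\partial\varphi(x)$ is the set of $v$ with $\varphi(y)\ge\varphi(x)+\langle v,y-x\rangle+o(\|y-x\|)$ as $y\to x$. A function $g$ is $\rho$-weakly convex if $g+\frac{\rho}{2}\|\cdot\|^2$ is convex. $\mathrm{prox}_{\alpha r}(x)=\operatorname{argmin}_y\{r(y)+\frac{1}{2\alpha}\|y-x\|^2\}$. $\mathbb{E}_t$ denotes expectation conditioned on $\xi_0,\ldots,\xi_{t-1}$. *)

theory Defs
  imports "HOL-Probability.Probability"
begin

definition frechet_subdiff :: "('a::real_inner \<Rightarrow> real) \<Rightarrow> 'a \<Rightarrow> 'a set" where
  "frechet_subdiff f x = {v. \<forall>e>0. eventually (\<lambda>y. f y \<ge> f x + inner v (y - x) - e * norm (y - x)) (at x)}"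

definition weakly_convex :: "real \<Rightarrow> ('a::real_normed_vector \<Rightarrow> real) \<Rightarrow> bool" where
  "weakly_convex \<rho> f \<longleftrightarrow> convex_on UNIV (\<lambda>x. f x + \<rho> / 2 * (norm x)\<^sup>2)"

text \<open>An extended-real valued function R^d \<rightarrow> R \<union> {+\<infinity>} is represented by its
  (effective) domain D and its finite values r on D; it is +\<infinity> outside D.\<close>
definition proper_closed_convex :: "'a::real_normed_vector set \<Rightarrow> ('a \<Rightarrow> real) \<Rightarrow> bool" where
  "proper_closed_convex D r \<longleftrightarrow> D \<noteq> {} \<and> convex D \<and> convex_on D r \<and>
     closed {(x, s::real). x \<in> D \<and> r x \<le> s}"

definition prox :: "'a::real_normed_vector set \<Rightarrow> ('a \<Rightarrow> real) \<Rightarrow> real \<Rightarrow> 'a \<Rightarrow> 'a" where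
  "prox D r \<alpha> x = (SOME y. y \<in> D \<and>
     (\<forall>z\<in>D. r y + 1 / (2 * \<alpha>) * (norm (y - x))\<^sup>2 \<le> r z + 1 / (2 * \<alpha>) * (norm (z - x))\<^sup>2))"

primrec sgd_iter :: "'a::real_normed_vector set \<Rightarrow> ('a \<Rightarrow> real) \<Rightarrow> ('a \<Rightarrow> 'b \<Rightarrow> 'a) \<Rightarrow>
    (nat \<Rightarrow> real) \<Rightarrow> 'a \<Rightarrow> (nat \<Rightarrow> 'b) \<Rightarrow> nat \<Rightarrow> 'a" where
  "sgd_iter D r G \<alpha> x0 \<xi> 0 = x0"
| "sgd_iter D r G \<alpha> x0 \<xi> (Suc t) =
     (let x = sgd_iter D r G \<alpha> x0 \<xi> t in prox D r (\<alpha> t) (x - \<alpha> t *\<^sub>R G x (\<xi> t)))"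

definition moreau_argmin :: "('a::real_normed_vector \<Rightarrow> real) \<Rightarrow> 'a set \<Rightarrow> ('a \<Rightarrow> real) \<Rightarrow> real \<Rightarrow> 'a \<Rightarrow> 'a" where
  "moreau_argmin f D r c x = (SOME y. y \<in> D \<and>
     (\<forall>z\<in>D. f y + r y + c / 2 * (norm (y - x))\<^sup>2 \<le> f z + r z + c / 2 * (norm (z - x))\<^sup>2))"

end

theory Submission
  imports Defs
begin


lemma epi_subseq:
  fixes Y :: "nat \<Rightarrow> 'a::euclidean_space" and \<phi> k :: "'a \<Rightarrow> real"
  assumes E: "closed {(y, s::real). y \<in> D \<and> \<phi> y \<le> s}" and bd: "bounded (range Y)"
    and k: "continuous_on UNIV k"
  shows "\<exists>l. \<forall>b. (\<forall>\<epsilon>>0. eventually (\<lambda>n. Y n \<in> D \<and> \<phi> (Y n) + k (Y n) \<le> b + \<epsilon>) sequentially)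
           \<longrightarrow> l \<in> D \<and> \<phi> l + k l \<le> b"
proof -
  obtain l r where r: "strict_mono (r::nat\<Rightarrow>nat)" and l: "((Y \<circ> r) \<longlongrightarrow> l) sequentially"
    using bounded_imp_convergent_subsequence[OF bd] by auto
  have kl: "((\<lambda>n. k (Y (r n))) \<longlongrightarrow> k l) sequentially"
    using continuous_on_tendsto_compose[OF k l] by (simp add: o_def)
  show ?thesis
  proof (intro exI allI impI)
    fix b assume H: "\<forall>\<epsilon>>0. eventually (\<lambda>n. Y n \<in> D \<and> \<phi> (Y n) + k (Y n) \<le> b + \<epsilon>) sequentially"
    have *: "l \<in> D \<and> \<phi> l \<le> b + \<epsilon> - k l" if e: "\<epsilon> > 0" for \<epsilon>
    proof -
      have ev: "eventually (\<lambda>n. Y (r n) \<in> D \<and> \<phi> (Y (r n)) + k (Y (r n)) \<le> b + \<epsilon>) sequentially"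
        using eventually_subseq[OF r, of "\<lambda>n. Y n \<in> D \<and> \<phi> (Y n) + k (Y n) \<le> b + \<epsilon>"] H e by blast
      have lim: "((\<lambda>n. (Y (r n), b + \<epsilon> - k (Y (r n)))) \<longlongrightarrow> (l, b + \<epsilon> - k l)) sequentially"
        using l kl by (intro tendsto_intros) (auto simp: o_def)
      have "(l, b + \<epsilon> - k l) \<in> {(y, s::real). y \<in> D \<and> \<phi> y \<le> s}"
        apply (rule Lim_in_closed_set[OF E _ _ lim])
        using ev by (auto elim!: eventually_mono)
      then show ?thesis by auto
    qed
    show "l \<in> D \<and> \<phi> l + k l \<le> b"
      using *[of 1] * by (auto intro: field_le_epsilon simp: algebra_simps)
  qed
qed

lemma epi_local_lb:
  fixes \<phi> :: "'a::euclidean_space \<Rightarrow> real"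
  assumes E: "closed {(y, s::real). y \<in> D \<and> \<phi> y \<le> s}"
  shows "\<exists>m. \<forall>y\<in>D. norm (y - y0) \<le> 1 \<longrightarrow> m \<le> \<phi> y"
proof (rule ccontr)
  assume "\<not> ?thesis"
  then have "\<forall>n::nat. \<exists>y. y \<in> D \<and> norm (y - y0) \<le> 1 \<and> \<phi> y < - real n"
    by (metis not_le)
  then obtain Y where Y: "\<And>n. Y n \<in> D \<and> norm (Y n - y0) \<le> 1 \<and> \<phi> (Y n) < - real n"
    by metis
  have bd: "bounded (range Y)"
  proof -
    have "range Y \<subseteq> cball y0 1" using Y by (auto simp: dist_norm norm_minus_commute)
    then show ?thesis using bounded_cball bounded_subset by blast
  qed
  obtain l where l: "\<And>b. (\<forall>\<epsilon>>0. eventually (\<lambda>n. Y n \<in> D \<and> \<phi> (Y n) + 0 \<le> b + \<epsilon>) sequentially)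
           \<Longrightarrow> l \<in> D \<and> \<phi> l + 0 \<le> b"
    using epi_subseq[OF E bd continuous_on_const[of UNIV 0]] by blast
  have "l \<in> D \<and> \<phi> l + 0 \<le> \<phi> l - 1"
  proof (rule l, intro allI impI)
    fix \<epsilon> :: real assume "\<epsilon> > 0"
    obtain N :: nat where N: "real N \<ge> 1 - \<phi> l" using real_arch_simple by blast
    show "eventually (\<lambda>n. Y n \<in> D \<and> \<phi> (Y n) + 0 \<le> \<phi> l - 1 + \<epsilon>) sequentially"
    proof (rule eventually_sequentiallyI[of N])
      fix n assume "N \<le> n"
      then have "real N \<le> real n" by simp
      then show "Y n \<in> D \<and> \<phi> (Y n) + 0 \<le> \<phi> l - 1 + \<epsilon>" using Y[of n] N \<open>\<epsilon> > 0\<close> by auto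
    qed
  qed
  then show False by simp
qed

lemma exists_min:
  fixes \<phi> :: "'a::euclidean_space \<Rightarrow> real"
  assumes Dne: "D \<noteq> {}" and Dc: "convex D" and cv: "convex_on D \<phi>"
    and E: "closed {(y, s::real). y \<in> D \<and> \<phi> y \<le> s}" and \<mu>: "\<mu> > 0"
  shows "\<exists>y\<in>D. \<forall>z\<in>D. \<phi> y + \<mu> / 2 * (norm y)\<^sup>2 \<le> \<phi> z + \<mu> / 2 * (norm z)\<^sup>2"
proof -
  obtain y0 where y0: "y0 \<in> D" using Dne by blast
  obtain m where m: "\<And>y. y \<in> D \<Longrightarrow> norm (y - y0) \<le> 1 \<Longrightarrow> m \<le> \<phi> y"
    using epi_local_lb[OF E, of y0] by blast
  define K where "K = \<bar>m - \<phi> y0\<bar>"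
  have K0: "K \<ge> 0" by (simp add: K_def)
  have lin: "\<phi> y \<ge> \<phi> y0 - K * (1 + norm (y - y0))" if y: "y \<in> D" for y
  proof (cases "norm (y - y0) \<le> 1")
    case True
    then have "m \<le> \<phi> y" using m y by blast
    moreover have "K * (1 + norm (y - y0)) \<ge> K" using K0 by (simp add: distrib_left)
    ultimately show ?thesis unfolding K_def by linarith
  next
    case False
    define n where "n = norm (y - y0)"
    have n1: "n > 1" using False n_def by simp
    define t where "t = 1 / n"
    have t: "0 \<le> t" "t \<le> 1" using n1 by (auto simp: t_def)
    define p where "p = (1 - t) *\<^sub>R y0 + t *\<^sub>R y"
    have pD: "p \<in> D" using Dc y0 y t unfolding p_def by (simp add: convex_alt)
    have "p - y0 = t *\<^sub>R (y - y0)" by (simp add: p_def algebra_simps)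
    then have "norm (p - y0) = 1" using n1 by (auto simp: t_def n_def)
    then have mp: "m \<le> \<phi> p" using m[OF pD] by simp
    have cvx: "\<phi> p \<le> (1 - t) * \<phi> y0 + t * \<phi> y" using convex_onD[OF cv t y0 y] by (simp add: p_def)
    have "t * \<phi> y \<ge> t * \<phi> y0 + (m - \<phi> y0)" using mp cvx by (simp add: algebra_simps)
    then have "n * (t * \<phi> y) \<ge> n * (t * \<phi> y0 + (m - \<phi> y0))" using n1 by (simp add: mult_left_mono)
    then have "\<phi> y \<ge> \<phi> y0 + n * (m - \<phi> y0)" using n1 by (simp add: t_def algebra_simps)
    moreover have "n * (m - \<phi> y0) \<ge> - K * n"
    proof -
      have "m - \<phi> y0 \<ge> -K" by (simp add: K_def)
      then have "n * (m - \<phi> y0) \<ge> n * (-K)" using n1 by (intro mult_left_mono) auto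
      then show ?thesis by (simp add: mult.commute)
    qed
    moreover have "K * (1 + n) = K + K * n" by (simp add: algebra_simps)
    ultimately show ?thesis using K0 unfolding n_def[symmetric] by linarith
  qed
  define F where "F y = \<phi> y + \<mu> / 2 * (norm y)\<^sup>2" for y
  define a where "a = \<phi> y0 - K - K * norm y0 - K\<^sup>2 / \<mu>"
  have quad: "F y \<ge> a + \<mu> / 4 * (norm y)\<^sup>2" if y: "y \<in> D" for y
  proof -
    have n: "norm (y - y0) \<le> norm y + norm y0" by (rule norm_triangle_ineq4)
    have "K * norm y \<le> \<mu> / 4 * (norm y)\<^sup>2 + K\<^sup>2 / \<mu>"
    proof -
      have "0 \<le> (\<mu> / 2 * norm y - K)\<^sup>2" by simp
      then have "0 \<le> \<mu>\<^sup>2 / 4 * (norm y)\<^sup>2 - \<mu> * K * norm y + K\<^sup>2"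
        by (simp add: power2_eq_square algebra_simps)
      then have "\<mu> * (K * norm y) \<le> \<mu> * (\<mu> / 4 * (norm y)\<^sup>2 + K\<^sup>2 / \<mu>)"
        using \<mu> by (simp add: power2_eq_square algebra_simps)
      then show ?thesis using \<mu> by simp
    qed
    moreover have "K * norm (y - y0) \<le> K * (norm y + norm y0)" using n K0 by (simp add: mult_left_mono)
    ultimately show ?thesis using lin[OF y] unfolding F_def a_def by (simp add: algebra_simps)
  qed
  have bdd: "bdd_below (F ` D)"
  proof (rule bdd_belowI2[of _ a])
    fix y assume "y \<in> D"
    moreover have "0 \<le> \<mu> / 4 * (norm y)\<^sup>2" using \<mu> by simp
    ultimately show "a \<le> F y" using quad[of y] by linarith
  qed
  define ms where "ms = (INF y\<in>D. F y)"
  have "\<forall>n::nat. \<exists>y\<in>D. F y < ms + 1 / (real n + 1)"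
  proof
    fix n :: nat
    have "ms < ms + 1 / (real n + 1)" by simp
    then show "\<exists>y\<in>D. F y < ms + 1 / (real n + 1)"
      using cINF_less_iff[OF Dne bdd] unfolding ms_def by blast
  qed
  then obtain Y where Y: "\<And>n. Y n \<in> D \<and> F (Y n) < ms + 1 / (real n + 1)" by metis
  have bd: "bounded (range Y)"
  proof -
    define R where "R = max 1 ((ms + 1 - a) * 4 / \<mu>)"
    have "norm (Y n) \<le> R" for n
    proof -
      have "F (Y n) \<le> ms + 1" using Y[of n]
        by (smt (verit) divide_le_eq_1_pos of_nat_0_le_iff)
      then have "\<mu> / 4 * (norm (Y n))\<^sup>2 \<le> ms + 1 - a" using quad[of "Y n"] Y by auto
      then have "(norm (Y n))\<^sup>2 \<le> (ms + 1 - a) * 4 / \<mu>" using \<mu> by (simp add: field_simps)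
      then show ?thesis unfolding R_def
        by (smt (verit) one_le_power power2_eq_square mult_le_cancel_left1 norm_ge_zero)
    qed
    then show ?thesis by (auto simp: bounded_iff)
  qed
  have kc: "continuous_on UNIV (\<lambda>y. \<mu> / 2 * (norm y)\<^sup>2)" by (intro continuous_intros)
  obtain l where l: "\<And>b. (\<forall>\<epsilon>>0. eventually (\<lambda>n. Y n \<in> D \<and> \<phi> (Y n) + \<mu> / 2 * (norm (Y n))\<^sup>2 \<le> b + \<epsilon>) sequentially)
           \<Longrightarrow> l \<in> D \<and> \<phi> l + \<mu> / 2 * (norm l)\<^sup>2 \<le> b"
    using epi_subseq[OF E bd kc] by blast
  have lm: "l \<in> D \<and> \<phi> l + \<mu> / 2 * (norm l)\<^sup>2 \<le> ms"
  proof (rule l, intro allI impI)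
    fix \<epsilon> :: real assume e: "\<epsilon> > 0"
    obtain N :: nat where N: "1 / \<epsilon> < real N" using reals_Archimedean2 by blast
    show "eventually (\<lambda>n. Y n \<in> D \<and> \<phi> (Y n) + \<mu> / 2 * (norm (Y n))\<^sup>2 \<le> ms + \<epsilon>) sequentially"
    proof (rule eventually_sequentiallyI[of N])
      fix n assume "N \<le> n"
      then have "1 / \<epsilon> < real n + 1" using N by linarith
      then have "1 / (real n + 1) < \<epsilon>" using e
        by (smt (verit) divide_less_eq mult.commute of_nat_0_le_iff pos_divide_less_eq)
      then show "Y n \<in> D \<and> \<phi> (Y n) + \<mu> / 2 * (norm (Y n))\<^sup>2 \<le> ms + \<epsilon>"
        using Y[of n] unfolding F_def by auto
    qed
  qed
  show ?thesis
  proof (intro bexI[of _ l] ballI)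
    fix z assume "z \<in> D"
    then have "ms \<le> F z" unfolding ms_def using bdd by (simp add: cINF_lower)
    then show "\<phi> l + \<mu> / 2 * (norm l)\<^sup>2 \<le> \<phi> z + \<mu> / 2 * (norm z)\<^sup>2" using lm unfolding F_def by linarith
  qed (use lm in auto)
qed

lemma eps_le:
  fixes A B K :: real
  assumes "\<And>s. 0 < s \<Longrightarrow> s \<le> 1 \<Longrightarrow> A \<le> B + s * K"
  shows "A \<le> B"
proof (rule ccontr)
  assume nle: "\<not> A \<le> B"
  show False
  proof (cases "K \<le> 0")
    case True
    then show False using assms[of 1] nle by simp
  next
    case False
    define s where "s = min 1 ((A - B) / (2 * K))"
    have s: "0 < s" "s \<le> 1" using False nle by (auto simp: s_def)
    have "s * K \<le> (A - B) / 2"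
    proof -
      have "s * K \<le> (A - B) / (2 * K) * K" using False by (intro mult_right_mono) (auto simp: s_def)
      then show ?thesis using False by simp
    qed
    then show False using assms[OF s] nle by simp
  qed
qed

lemma convex_on_inner: "convex S \<Longrightarrow> convex_on S (\<lambda>y. c * inner a y)"
  by (rule convex_onI) (auto simp: inner_simps algebra_simps)

lemma epi_add_cont:
  fixes r k :: "'a::euclidean_space \<Rightarrow> real"
  assumes E: "closed {(y, s::real). y \<in> D \<and> r y \<le> s}" and k: "continuous_on UNIV k"
  shows "closed {(y, s::real). y \<in> D \<and> r y + k y \<le> s}"
proof -
  have eq: "{(y, s::real). y \<in> D \<and> r y + k y \<le> s} = (\<lambda>p. (fst p, snd p - k (fst p))) -` {(y, s::real). y \<in> D \<and> r y \<le> s}"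
    by auto
  have "continuous_on UNIV (\<lambda>p::'a\<times>real. (fst p, snd p - k (fst p)))"
    by (intro continuous_intros continuous_on_compose2[OF k]) auto
  then have "continuous (at p) (\<lambda>p::'a\<times>real. (fst p, snd p - k (fst p)))" for p
    by (metis continuous_on_eq_continuous_at open_UNIV UNIV_I)
  then show ?thesis unfolding eq by (intro continuous_closed_vimage E)
qed

lemma nsq_add: "(norm (a + b))\<^sup>2 = (norm a)\<^sup>2 + 2 * inner a b + (norm (b::'a::real_inner))\<^sup>2"
  by (simp add: dot_norm field_simps)
lemma nsq_diff: "(norm (a - b))\<^sup>2 = (norm a)\<^sup>2 - 2 * inner a b + (norm (b::'a::real_inner))\<^sup>2"
  using nsq_add[of a "-b"] by simp

lemma var_ineq:
  fixes \<phi> :: "'a::euclidean_space \<Rightarrow> real"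
  assumes cv: "convex_on D \<phi>" and ys: "ys \<in> D" and \<mu>: "\<mu> > 0"
    and min: "\<And>y. y \<in> D \<Longrightarrow> \<phi> ys + \<mu> / 2 * (norm (ys - z))\<^sup>2 \<le> \<phi> y + \<mu> / 2 * (norm (y - z))\<^sup>2"
    and y: "y \<in> D"
  shows "\<phi> y - \<phi> ys \<ge> \<mu> * inner (z - ys) (y - ys)"
proof -
  have H: "\<mu> * inner (z - ys) (y - ys) \<le> \<phi> y - \<phi> ys + s * (\<mu> / 2 * (norm (y - ys))\<^sup>2)"
    if s: "0 < s" "s \<le> 1" for s
  proof -
    define p where "p = (1 - s) *\<^sub>R ys + s *\<^sub>R y"
    have pD: "p \<in> D" using convex_onD[OF cv, of s ys y] cv s ys y
      unfolding p_def convex_on_def by (auto simp: convex_alt)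
    have c: "\<phi> p \<le> (1 - s) * \<phi> ys + s * \<phi> y" using convex_onD[OF cv, of s ys y] s ys y by (simp add: p_def)
    have pz: "p - z = (ys - z) + s *\<^sub>R (y - ys)" by (simp add: p_def algebra_simps)
    define I where "I = inner (ys - z) (y - ys)"
    define N where "N = (norm (y - ys))\<^sup>2"
    have n: "(norm (p - z))\<^sup>2 = (norm (ys - z))\<^sup>2 + 2 * s * I + s\<^sup>2 * N"
      unfolding pz nsq_add I_def N_def by (simp add: power_mult_distrib)
    have n2: "\<mu> / 2 * (norm (p - z))\<^sup>2 = \<mu> / 2 * ((norm (ys - z))\<^sup>2 + 2 * s * I + s\<^sup>2 * N)"
      using n by simp
    have "\<phi> ys + \<mu> / 2 * (norm (ys - z))\<^sup>2 \<le> (1 - s) * \<phi> ys + s * \<phi> y + \<mu> / 2 * ((norm (ys - z))\<^sup>2 + 2 * s * I + s\<^sup>2 * N)"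
      using min[OF pD] c n2 by linarith
    then have "s * (\<mu> * (- I)) \<le> s * (\<phi> y - \<phi> ys + s * (\<mu> / 2 * N))"
      by (simp add: algebra_simps power2_eq_square)
    moreover have "inner (z - ys) (y - ys) = - I" unfolding I_def by (simp add: inner_diff_left)
    ultimately have "s * (\<mu> * inner (z - ys) (y - ys)) \<le> s * (\<phi> y - \<phi> ys + s * (\<mu> / 2 * N))" by simp
    then show ?thesis using s unfolding N_def by simp
  qed
  show ?thesis by (rule eps_le[OF H])
qed

lemma subgrad_global:
  fixes f :: "'a::real_inner \<Rightarrow> real"
  assumes wc: "weakly_convex \<rho> f" and \<rho>: "\<rho> \<ge> 0" and v: "v \<in> frechet_subdiff f y"
  shows "f z \<ge> f y + inner v (z - y) - \<rho> / 2 * (norm (z - y))\<^sup>2"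
proof (cases "z = y")
  case True then show ?thesis by simp
next
  case False
  define h where "h u = f u + \<rho> / 2 * (norm u)\<^sup>2" for u
  have hc: "convex_on UNIV h" using wc unfolding weakly_convex_def h_def by simp
  have key: "f z \<ge> f y + inner v (z - y) - e * norm (z - y) - \<rho> / 2 * (norm (z - y))\<^sup>2" if e: "e > 0" for e
  proof -
    have "eventually (\<lambda>u. f u \<ge> f y + inner v (u - y) - e * norm (u - y)) (at y)"
      using v e unfolding frechet_subdiff_def by blast
    then obtain d where d: "d > 0" and dH: "\<And>u. u \<noteq> y \<Longrightarrow> dist u y < d \<Longrightarrow> f u \<ge> f y + inner v (u - y) - e * norm (u - y)"
      unfolding eventually_at by auto
    define n where "n = norm (z - y)"
    have n: "n > 0" using False by (simp add: n_def)
    define t where "t = min 1 (d / (2 * n))"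
    have t: "0 < t" "t \<le> 1" using d n by (auto simp: t_def)
    define u where "u = (1 - t) *\<^sub>R y + t *\<^sub>R z"
    have uy: "u - y = t *\<^sub>R (z - y)" by (simp add: u_def algebra_simps)
    have dun: "dist u y = t * n" using t by (simp add: dist_norm uy n_def)
    also have "\<dots> \<le> d / (2 * n) * n" using n by (intro mult_right_mono) (auto simp: t_def)
    also have "\<dots> < d" using n d by simp
    finally have du: "dist u y < d" .
    have "u \<noteq> y" using dun t n by auto
    then have fu: "f u \<ge> f y + t * inner v (z - y) - e * (t * n)"
      using dH[OF _ du] using t by (simp add: uy n_def)
    have hu: "h u \<le> (1 - t) * h y + t * h z" using convex_onD[OF hc, of t y z] t by (simp add: u_def)
    have nu: "(norm u)\<^sup>2 - (1 - t) * (norm y)\<^sup>2 = t * (norm z)\<^sup>2 - t * (1 - t) * (norm (z - y))\<^sup>2"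
      unfolding u_def power2_norm_eq_inner by (simp add: inner_simps algebra_simps power2_eq_square)
    have B: "\<rho> * ((norm u)\<^sup>2 - (1 - t) * (norm y)\<^sup>2) = \<rho> * (t * (norm z)\<^sup>2 - t * (1 - t) * (norm (z - y))\<^sup>2)"
      using nu by simp
    have "t * (f y + inner v (z - y) - e * n - \<rho> / 2 * (1 - t) * n\<^sup>2) \<le> t * f z"
      using hu fu B unfolding h_def n_def by (simp add: algebra_simps) (simp add: field_simps)
    then have "f y + inner v (z - y) - e * n - \<rho> / 2 * (1 - t) * n\<^sup>2 \<le> f z"
      using t by (simp add: mult_le_cancel_left_pos)
    moreover have "\<rho> / 2 * (1 - t) * n\<^sup>2 \<le> \<rho> / 2 * n\<^sup>2"
    proof -
      have "0 \<le> t * (\<rho> / 2 * n\<^sup>2)" using t \<rho> by simp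
      then show ?thesis by (simp add: algebra_simps)
    qed
    ultimately show ?thesis unfolding n_def by linarith
  qed
  show ?thesis
  proof (rule field_le_epsilon)
    fix e :: real assume e: "e > 0"
    define e' where "e' = e / (norm (z - y))"
    have e': "e' > 0" using e False by (simp add: e'_def)
    have "e' * norm (z - y) = e" using False by (simp add: e'_def)
    then show "f y + inner v (z - y) - \<rho> / 2 * (norm (z - y))\<^sup>2 \<le> f z + e" using key[OF e'] by linarith
  qed
qed



lemma prox_props:
  fixes r :: "'a::euclidean_space \<Rightarrow> real"
  assumes pcc: "proper_closed_convex D r" and \<alpha>: "\<alpha> > 0"
  shows "prox D r \<alpha> z \<in> D \<and> (\<forall>w\<in>D. r (prox D r \<alpha> z) + 1 / (2 * \<alpha>) * (norm (prox D r \<alpha> z - z))\<^sup>2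
            \<le> r w + 1 / (2 * \<alpha>) * (norm (w - z))\<^sup>2)"
proof -
  have Dne: "D \<noteq> {}" and Dc: "convex D" and rc: "convex_on D r" and E: "closed {(x, s::real). x \<in> D \<and> r x \<le> s}"
    using pcc unfolding proper_closed_convex_def by auto
  define k where "k w = (- 1 / \<alpha>) * inner z w" for w
  have kc: "continuous_on UNIV k" unfolding k_def by (intro continuous_intros)
  have cv: "convex_on D (\<lambda>w. r w + k w)" unfolding k_def
    by (intro convex_on_add rc convex_on_inner Dc)
  have E2: "closed {(y, s::real). y \<in> D \<and> r y + k y \<le> s}" by (rule epi_add_cont[OF E kc])
  have "1 / \<alpha> > 0" using \<alpha> by simp
  from exists_min[OF Dne Dc cv E2 this] obtain y where y: "y \<in> D"
    and ymin: "\<And>w. w \<in> D \<Longrightarrow> r y + k y + 1 / \<alpha> / 2 * (norm y)\<^sup>2 \<le> r w + k w + 1 / \<alpha> / 2 * (norm w)\<^sup>2"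
    by blast
  have eq: "r w + 1 / (2 * \<alpha>) * (norm (w - z))\<^sup>2 = r w + k w + 1 / \<alpha> / 2 * (norm w)\<^sup>2 + 1 / (2 * \<alpha>) * (norm z)\<^sup>2" for w
    unfolding k_def nsq_diff using \<alpha> by (simp add: field_simps inner_commute)
  have ex: "\<exists>y. y \<in> D \<and> (\<forall>w\<in>D. r y + 1 / (2 * \<alpha>) * (norm (y - z))\<^sup>2 \<le> r w + 1 / (2 * \<alpha>) * (norm (w - z))\<^sup>2)"
    using y ymin unfolding eq by (intro exI[of _ y]) auto
  show ?thesis unfolding prox_def by (rule someI_ex[OF ex])
qed

lemma moreau_props:
  fixes f r :: "'a::euclidean_space \<Rightarrow> real"
  assumes \<rho>: "\<rho> > 0" and wc: "weakly_convex \<rho> f" and pcc: "proper_closed_convex D r" and c: "\<rho> < c"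
  shows "moreau_argmin f D r c x \<in> D \<and> (\<forall>w\<in>D. f (moreau_argmin f D r c x) + r (moreau_argmin f D r c x)
            + c / 2 * (norm (moreau_argmin f D r c x - x))\<^sup>2 \<le> f w + r w + c / 2 * (norm (w - x))\<^sup>2)"
proof -
  have Dne: "D \<noteq> {}" and Dc: "convex D" and rc: "convex_on D r" and E: "closed {(x, s::real). x \<in> D \<and> r x \<le> s}"
    using pcc unfolding proper_closed_convex_def by auto
  define h where "h w = f w + \<rho> / 2 * (norm w)\<^sup>2" for w
  have hc: "convex_on UNIV h" using wc unfolding weakly_convex_def h_def by simp
  have hcont: "continuous_on UNIV h" by (rule convex_on_continuous[OF open_UNIV hc])
  define k where "k w = h w + (- c) * inner x w" for w
  have kc: "continuous_on UNIV k" unfolding k_def by (intro continuous_intros hcont)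
  have cv: "convex_on D (\<lambda>w. r w + k w)" unfolding k_def
    by (intro convex_on_add rc convex_on_inner Dc convex_on_subset[OF hc]) auto
  have E2: "closed {(y, s::real). y \<in> D \<and> r y + k y \<le> s}" by (rule epi_add_cont[OF E kc])
  have "c - \<rho> > 0" using c by simp
  from exists_min[OF Dne Dc cv E2 this] obtain y where y: "y \<in> D"
    and ymin: "\<And>w. w \<in> D \<Longrightarrow> r y + k y + (c - \<rho>) / 2 * (norm y)\<^sup>2 \<le> r w + k w + (c - \<rho>) / 2 * (norm w)\<^sup>2"
    by blast
  have eq: "f w + r w + c / 2 * (norm (w - x))\<^sup>2 = r w + k w + (c - \<rho>) / 2 * (norm w)\<^sup>2 + c / 2 * (norm x)\<^sup>2" for w
    unfolding k_def h_def nsq_diff by (simp add: field_simps inner_commute)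
  have ex: "\<exists>y. y \<in> D \<and> (\<forall>w\<in>D. f y + r y + c / 2 * (norm (y - x))\<^sup>2 \<le> f w + r w + c / 2 * (norm (w - x))\<^sup>2)"
    using y ymin unfolding eq by (intro exI[of _ y]) auto
  show ?thesis unfolding moreau_argmin_def by (rule someI_ex[OF ex])
qed

lemma mean_bound:
  fixes g :: "'b \<Rightarrow> 'a::euclidean_space"
  assumes P: "prob_space M" and int: "integrable M g"
    and sq: "(\<integral>\<^sup>+\<omega>. ennreal ((norm (g \<omega>))\<^sup>2) \<partial>M) \<le> ennreal (L\<^sup>2)" and L: "L \<ge> 0"
  shows "integrable M (\<lambda>\<omega>. (norm (g \<omega>))\<^sup>2)" and "(\<integral>\<omega>. (norm (g \<omega>))\<^sup>2 \<partial>M) \<le> L\<^sup>2"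
    and "norm (\<integral>\<omega>. g \<omega> \<partial>M) \<le> L"
proof -
  interpret prob_space M by (rule P)
  have gm: "g \<in> borel_measurable M" using int by (rule borel_measurable_integrable)
  have hm: "(\<lambda>\<omega>. (norm (g \<omega>))\<^sup>2) \<in> borel_measurable M" using gm by measurable
  show hi: "integrable M (\<lambda>\<omega>. (norm (g \<omega>))\<^sup>2)"
  proof (rule integrableI_bounded[OF hm])
    have "(\<integral>\<^sup>+\<omega>. ennreal (norm ((norm (g \<omega>))\<^sup>2)) \<partial>M) = (\<integral>\<^sup>+\<omega>. ennreal ((norm (g \<omega>))\<^sup>2) \<partial>M)" by simp
    also have "\<dots> \<le> ennreal (L\<^sup>2)" by (rule sq)
    also have "\<dots> < \<infinity>" by simp
    finally show "(\<integral>\<^sup>+\<omega>. ennreal (norm ((norm (g \<omega>))\<^sup>2)) \<partial>M) < \<infinity>" .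
  qed
  have "ennreal (\<integral>\<omega>. (norm (g \<omega>))\<^sup>2 \<partial>M) = (\<integral>\<^sup>+\<omega>. ennreal ((norm (g \<omega>))\<^sup>2) \<partial>M)"
    by (rule nn_integral_eq_integral[symmetric]) (use hi in auto)
  also have "\<dots> \<le> ennreal (L\<^sup>2)" by (rule sq)
  finally show hb: "(\<integral>\<omega>. (norm (g \<omega>))\<^sup>2 \<partial>M) \<le> L\<^sup>2" by (simp add: ennreal_le_iff)
  define m where "m = (\<integral>\<omega>. g \<omega> \<partial>M)"
  have pt: "inner m (g \<omega>) \<le> (norm m)\<^sup>2 / 2 + (norm (g \<omega>))\<^sup>2 / 2" for \<omega>
  proof -
    have "inner m (g \<omega>) \<le> norm m * norm (g \<omega>)" by (rule norm_cauchy_schwarz)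
    also have "\<dots> \<le> (norm m)\<^sup>2 / 2 + (norm (g \<omega>))\<^sup>2 / 2"
      using sum_squares_bound[of "norm m" "norm (g \<omega>)"] by (simp add: power2_eq_square field_simps)
    finally show ?thesis .
  qed
  have "(norm m)\<^sup>2 = inner m m" by (simp add: power2_norm_eq_inner)
  also have "\<dots> = (\<integral>\<omega>. inner m (g \<omega>) \<partial>M)" unfolding m_def using int by simp
  also have "\<dots> \<le> (\<integral>\<omega>. (norm m)\<^sup>2 / 2 + (norm (g \<omega>))\<^sup>2 / 2 \<partial>M)"
    by (rule integral_mono) (use int hi pt in auto)
  also have "\<dots> = (norm m)\<^sup>2 / 2 + (\<integral>\<omega>. (norm (g \<omega>))\<^sup>2 \<partial>M) / 2"
    using hi by (simp add: prob_space)
  finally have "(norm m)\<^sup>2 \<le> L\<^sup>2" using hb by simp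
  then show "norm (\<integral>\<omega>. g \<omega> \<partial>M) \<le> L" unfolding m_def using L by (rule power2_le_imp_le)
qed



lemma pointwise:
  fixes x xh xp g v :: "'a::real_inner" and f r :: "'a \<Rightarrow> real"
  assumes Dc: "convex D" and rc: "convex_on D r" and xhD: "xh \<in> D" and xpD: "xp \<in> D"
    and a: "a > 0" and \<rho>: "\<rho> > 0" and \<rho>': "\<rho> < \<rho>'" "\<rho>' \<le> 2 * \<rho>" and a1: "a \<le> 1 / \<rho>'"
    and xhmin: "\<And>w. w \<in> D \<Longrightarrow> f xh + r xh + \<rho>' / 2 * (norm (xh - x))\<^sup>2 \<le> f w + r w + \<rho>' / 2 * (norm (w - x))\<^sup>2"
    and xpvi: "\<And>w. w \<in> D \<Longrightarrow> r w - r xp \<ge> (1 / a) * inner ((x - a *\<^sub>R g) - xp) (w - xp)"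
    and W: "\<And>y. y \<in> D \<Longrightarrow> \<exists>u. norm u \<le> L \<and> (\<forall>z. f z \<ge> f y + inner u (z - y) - \<rho> / 2 * (norm (z - y))\<^sup>2)"
    and vW: "\<And>z. f z \<ge> f x + inner v (z - x) - \<rho> / 2 * (norm (z - x))\<^sup>2"
  shows "(norm (xp - xh))\<^sup>2 \<le> ((1 - a * \<rho>')\<^sup>2 + 2 * a * \<rho> * (1 - a * \<rho>')) * (norm (xh - x))\<^sup>2
           + 2 * a * (1 - a * \<rho>') * inner (xh - x) (g - v) + 2 * a\<^sup>2 * (L\<^sup>2 + (norm g)\<^sup>2)"
proof -
  define \<Delta> where "\<Delta> = xp - xh"
  define d where "d = xh - x"
  define c where "c = 1 - a * \<rho>'"
  have c0: "c \<ge> 0" using a1 a \<rho> \<rho>' unfolding c_def by (simp add: field_simps)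
  define DD where "DD = (norm \<Delta>)\<^sup>2"
  define dd where "dd = (norm d)\<^sup>2"
  define Dd where "Dd = inner \<Delta> d"
  define Dg where "Dg = inner \<Delta> g"
  obtain gh where gh: "norm gh \<le> L" and ghW: "\<And>z. f z \<ge> f xh + inner gh (z - xh) - \<rho> / 2 * (norm (z - xh))\<^sup>2"
    using W[OF xhD] by blast
  have L0: "L \<ge> 0" using gh norm_ge_zero order_trans by blast
  have P: "r xh - r xp \<ge> (1 / a) * (DD + Dd + a * Dg)"
  proof -
    have "inner ((x - a *\<^sub>R g) - xp) (xh - xp) = DD + Dd + a * Dg"
    proof -
      have e1: "(x - a *\<^sub>R g) - xp = - (\<Delta> + d + a *\<^sub>R g)" unfolding \<Delta>_def d_def by (simp add: algebra_simps)
      have e2: "xh - xp = - \<Delta>" unfolding \<Delta>_def by simp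
      show ?thesis unfolding e1 e2 DD_def Dd_def Dg_def
        by (simp add: inner_add_left inner_add_right inner_diff_right inner_commute power2_norm_eq_inner)
    qed
    then show ?thesis using xpvi[OF xhD] by simp
  qed
  define K where "K = a * (\<rho> + \<rho>') * DD + 2 * c * a * (2 * L * norm \<Delta> + \<rho> * (norm \<Delta> * norm d) + \<rho> * DD)"
  have main: "DD \<le> (c\<^sup>2 + 2 * c * a * \<rho>) * dd + 2 * c * a * inner d (g - v) + 2 * a\<^sup>2 * (L\<^sup>2 + (norm g)\<^sup>2) + s * K"
    if s: "0 < s" "s \<le> 1" for s
  proof -
    define p where "p = xh + s *\<^sub>R \<Delta>"
    have pD: "p \<in> D"
    proof -
      have "p = (1 - s) *\<^sub>R xh + s *\<^sub>R xp" unfolding p_def \<Delta>_def by (simp add: algebra_simps)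
      then show ?thesis using Dc xhD xpD s by (simp add: convex_alt)
    qed
    obtain w where w: "norm w \<le> L" and wW: "\<And>z. f z \<ge> f p + inner w (z - p) - \<rho> / 2 * (norm (z - p))\<^sup>2"
      using W[OF pD] by blast
    define Dw where "Dw = inner \<Delta> w"
    define Dgh where "Dgh = inner \<Delta> gh"
    define dw where "dw = inner d w"
    define dv where "dv = inner d v"
    have rp: "r p \<le> (1 - s) * r xh + s * r xp"
    proof -
      have "p = (1 - s) *\<^sub>R xh + s *\<^sub>R xp" unfolding p_def \<Delta>_def by (simp add: algebra_simps)
      then show ?thesis using convex_onD[OF rc, of s xh xp] s xhD xpD by simp
    qed
    have npx: "(norm (p - x))\<^sup>2 = dd + 2 * s * Dd + s\<^sup>2 * DD"
    proof -
      have "p - x = d + s *\<^sub>R \<Delta>" unfolding p_def d_def by (simp add: algebra_simps)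
      then show ?thesis unfolding dd_def Dd_def DD_def
        by (simp add: nsq_add power_mult_distrib inner_commute)
    qed
    have npxh: "(norm (xh - p))\<^sup>2 = s\<^sup>2 * DD" "(norm (p - xh))\<^sup>2 = s\<^sup>2 * DD"
      unfolding p_def DD_def by (simp_all add: power_mult_distrib)
    have X: "f xh + r xh + \<rho>' / 2 * dd \<le> f p + r p + \<rho>' / 2 * (dd + 2 * s * Dd + s\<^sup>2 * DD)"
      using xhmin[OF pD] unfolding npx d_def[symmetric] dd_def[symmetric] by simp
    have W1: "f xh \<ge> f p - s * Dw - \<rho> / 2 * (s\<^sup>2 * DD)"
      using wW[of xh] unfolding npxh by (simp add: p_def Dw_def inner_commute)
    have W2: "f x \<ge> f p - (dw + s * Dw) - \<rho> / 2 * (dd + 2 * s * Dd + s\<^sup>2 * DD)"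
    proof -
      have "x - p = - (d + s *\<^sub>R \<Delta>)" unfolding p_def d_def by (simp add: algebra_simps)
      moreover have "(norm (x - p))\<^sup>2 = (norm (p - x))\<^sup>2" by (simp add: norm_minus_commute)
      ultimately show ?thesis using wW[of x] unfolding npx
        by (simp add: dw_def Dw_def inner_add_right inner_diff_right inner_commute)
    qed
    have W3: "f xh \<ge> f x + dv - \<rho> / 2 * dd"
      using vW[of xh] unfolding dv_def dd_def d_def by (simp add: inner_commute)
    have W4: "f p \<ge> f xh + s * Dgh - \<rho> / 2 * (s\<^sup>2 * DD)"
      using ghW[of p] unfolding npxh by (simp add: p_def Dgh_def inner_commute)
    have s1: "s * (r xh - r xp) \<le> s * (Dw + \<rho>' * Dd + (\<rho> + \<rho>') / 2 * s * DD)"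
      using X rp W1 by (simp add: algebra_simps power2_eq_square) (simp add: field_simps)
    have s2: "r xh - r xp \<le> Dw + \<rho>' * Dd + (\<rho> + \<rho>') / 2 * s * DD"
      using s1 s by (simp add: mult_le_cancel_left_pos)
    have one: "DD + Dd + a * Dg \<le> a * (Dw + \<rho>' * Dd + (\<rho> + \<rho>') / 2 * s * DD)"
    proof -
      have "(1 / a) * (DD + Dd + a * Dg) \<le> Dw + \<rho>' * Dd + (\<rho> + \<rho>') / 2 * s * DD" using P s2 by linarith
      then show ?thesis using a by (simp add: field_simps)
    qed
    have two: "dw - dv \<ge> - \<rho> * dd + s * (Dgh - Dw - \<rho> * Dd) - \<rho> * s\<^sup>2 * DD"
      using W2 W3 W4 by (simp add: algebra_simps)
    define dg where "dg = inner d g"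
    define A where "A = (- c) *\<^sub>R d + a *\<^sub>R (w - g)"
    have A_inner: "inner \<Delta> A = - c * Dd + a * (Dw - Dg)"
      unfolding A_def Dd_def Dw_def Dg_def by (simp add: inner_add_right inner_diff_right)
    have A_norm: "(norm A)\<^sup>2 = c\<^sup>2 * dd - 2 * c * a * (dw - dg) + a\<^sup>2 * (norm (w - g))\<^sup>2"
    proof -
      have n1: "(norm ((- c) *\<^sub>R d))\<^sup>2 = c\<^sup>2 * dd" by (simp add: dd_def power_mult_distrib)
      have n2: "(norm (a *\<^sub>R (w - g)))\<^sup>2 = a\<^sup>2 * (norm (w - g))\<^sup>2" by (simp add: power_mult_distrib)
      have n3: "inner ((- c) *\<^sub>R d) (a *\<^sub>R (w - g)) = - c * a * (dw - dg)"
        by (simp add: dw_def dg_def inner_diff_right algebra_simps)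
      show ?thesis unfolding A_def nsq_add n1 n2 n3 by simp
    qed
    have wg: "(norm (w - g))\<^sup>2 \<le> 2 * L\<^sup>2 + 2 * (norm g)\<^sup>2"
    proof -
      have "norm (w - g) \<le> norm w + norm g" by (rule norm_triangle_ineq4)
      then have "(norm (w - g))\<^sup>2 \<le> (norm w + norm g)\<^sup>2" by (simp add: power_mono)
      also have "\<dots> \<le> 2 * (norm w)\<^sup>2 + 2 * (norm g)\<^sup>2"
        using sum_squares_bound[of "norm w" "norm g"] by (simp add: power2_sum)
      also have "\<dots> \<le> 2 * L\<^sup>2 + 2 * (norm g)\<^sup>2" using w by (simp add: power_mono)
      finally show ?thesis .
    qed
    have cs: "2 * inner \<Delta> A \<le> DD + (norm A)\<^sup>2"
    proof -
      have "0 \<le> (norm (\<Delta> - A))\<^sup>2" by simp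
      then show ?thesis unfolding nsq_diff DD_def by simp
    qed
    have T1: "DD \<le> (norm A)\<^sup>2 + a * (\<rho> + \<rho>') * s * DD"
    proof -
      have e: "a * (Dw + \<rho>' * Dd + (\<rho> + \<rho>') / 2 * s * DD) = a * Dw + a * \<rho>' * Dd + a * (\<rho> + \<rho>') * s * DD / 2"
        by (simp add: algebra_simps)
      have e2: "- c * Dd + a * (Dw - Dg) = - Dd + a * \<rho>' * Dd + a * Dw - a * Dg"
        unfolding c_def by (simp add: algebra_simps)
      show ?thesis using one cs A_inner e e2 by linarith
    qed
    have T2: "(norm A)\<^sup>2 \<le> c\<^sup>2 * dd - 2 * c * a * (dw - dg) + 2 * a\<^sup>2 * (L\<^sup>2 + (norm g)\<^sup>2)"
    proof -
      have "a\<^sup>2 * (norm (w - g))\<^sup>2 \<le> a\<^sup>2 * (2 * L\<^sup>2 + 2 * (norm g)\<^sup>2)" using wg by (simp add: mult_left_mono)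
      then show ?thesis unfolding A_norm by (simp add: algebra_simps)
    qed
    define Q where "Q = 2 * c * a"
    have Q0: "Q \<ge> 0" unfolding Q_def using c0 a by simp
    have T3: "Q * (dw - dv) \<ge> Q * (- \<rho> * dd + s * (Dgh - Dw - \<rho> * Dd) - \<rho> * s\<^sup>2 * DD)"
      by (rule mult_left_mono[OF two Q0])
    have b1: "- Dgh \<le> L * norm \<Delta>"
    proof -
      have "- Dgh \<le> norm \<Delta> * norm gh" unfolding Dgh_def
        using norm_cauchy_schwarz[of \<Delta> "- gh"] by simp
      also have "\<dots> \<le> norm \<Delta> * L" using gh by (simp add: mult_left_mono)
      finally show ?thesis by (simp add: mult.commute)
    qed
    have b2: "Dw \<le> L * norm \<Delta>"
    proof -
      have "Dw \<le> norm \<Delta> * norm w" unfolding Dw_def by (rule norm_cauchy_schwarz)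
      also have "\<dots> \<le> norm \<Delta> * L" using w by (simp add: mult_left_mono)
      finally show ?thesis by (simp add: mult.commute)
    qed
    have b3: "\<rho> * Dd \<le> \<rho> * (norm \<Delta> * norm d)"
      using norm_cauchy_schwarz[of \<Delta> d] \<rho> unfolding Dd_def by (simp add: mult_left_mono)
    have b4: "\<rho> * s * DD \<le> \<rho> * DD"
    proof -
      have "s * DD \<le> DD" using s unfolding DD_def by (simp add: mult_left_le_one_le)
      then show ?thesis using \<rho> by (simp add: mult_left_mono mult.assoc)
    qed
    have T4: "Q * (- (Dgh - Dw - \<rho> * Dd) + \<rho> * s * DD) \<le> Q * (2 * L * norm \<Delta> + \<rho> * (norm \<Delta> * norm d) + \<rho> * DD)"
      using b1 b2 b3 b4 Q0 by (intro mult_left_mono) auto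
    have T5: "s * (a * (\<rho> + \<rho>') * DD + Q * (- (Dgh - Dw - \<rho> * Dd) + \<rho> * s * DD)) \<le> s * K"
    proof -
      have "a * (\<rho> + \<rho>') * DD + Q * (- (Dgh - Dw - \<rho> * Dd) + \<rho> * s * DD) \<le> K"
        using T4 unfolding K_def Q_def by (simp add: algebra_simps)
      then show ?thesis using s by (simp add: mult_left_mono)
    qed
    have dgv: "inner d (g - v) = dg - dv" unfolding dg_def dv_def by (simp add: inner_diff_right)
    have ring: "c\<^sup>2 * dd - Q * (dw - dg) + a * (\<rho> + \<rho>') * s * DD
        = c\<^sup>2 * dd - Q * (dw - dv) + Q * (dg - dv) + a * (\<rho> + \<rho>') * s * DD" by (simp add: algebra_simps)
    have ring2: "c\<^sup>2 * dd - Q * (- \<rho> * dd + s * (Dgh - Dw - \<rho> * Dd) - \<rho> * s\<^sup>2 * DD) + Q * (dg - dv) + a * (\<rho> + \<rho>') * s * DD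
        = (c\<^sup>2 + 2 * c * a * \<rho>) * dd + 2 * c * a * (dg - dv) + s * (a * (\<rho> + \<rho>') * DD + Q * (- (Dgh - Dw - \<rho> * Dd) + \<rho> * s * DD))"
      unfolding Q_def by (simp add: algebra_simps power2_eq_square)
    have "DD \<le> c\<^sup>2 * dd - Q * (dw - dg) + 2 * a\<^sup>2 * (L\<^sup>2 + (norm g)\<^sup>2) + a * (\<rho> + \<rho>') * s * DD"
      using T1 T2 unfolding Q_def by linarith
    then show ?thesis unfolding dgv using ring ring2 T3 T5 by linarith
  qed
  have "DD \<le> (c\<^sup>2 + 2 * c * a * \<rho>) * dd + 2 * c * a * inner d (g - v) + 2 * a\<^sup>2 * (L\<^sup>2 + (norm g)\<^sup>2)"
    by (rule eps_le[OF main])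
  then show ?thesis unfolding DD_def dd_def c_def \<Delta>_def d_def by (simp add: algebra_simps)
qed



theorem lemma3p3:
  fixes \<rho> \<rho>' L :: real
    and f r :: "'a::euclidean_space \<Rightarrow> real" and D U :: "'a set"
    and M :: "'b measure" and G :: "'a \<Rightarrow> 'b \<Rightarrow> 'a"
    and \<alpha> :: "nat \<Rightarrow> real" and x0 :: 'a and \<xi> :: "nat \<Rightarrow> 'b" and t :: nat
  assumes rho_pos: "\<rho> > 0"
    and f_wc: "weakly_convex \<rho> f"
    and r_pcc: "proper_closed_convex D r"
    and A1: "prob_space M"
    and xi_in: "\<And>i. \<xi> i \<in> space M"
    and U_open: "open U" and D_sub_U: "D \<subseteq> U"
    and G_meas: "(\<lambda>(x, \<omega>). G x \<omega>) \<in> borel_measurable (restrict_space (borel \<Otimes>\<^sub>M M) (U \<times> space M))"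
    and A2_int: "\<And>x. x \<in> U \<Longrightarrow> integrable M (G x)"
    and A2: "\<And>x. x \<in> U \<Longrightarrow> (\<integral>\<omega>. G x \<omega> \<partial>M) \<in> frechet_subdiff f x"
    and L_nonneg: "L \<ge> 0"
    and A3: "\<And>x. x \<in> D \<Longrightarrow> (\<integral>\<^sup>+\<omega>. ennreal ((norm (G x \<omega>))\<^sup>2) \<partial>M) \<le> ennreal (L\<^sup>2)"
    and x0_in: "x0 \<in> D"
    and rho'_gt: "\<rho> < \<rho>'" and rho'_le: "\<rho>' \<le> 2 * \<rho>"
    and alpha_pos: "\<And>s. 0 < \<alpha> s" and alpha_le: "\<And>s. \<alpha> s \<le> 1 / \<rho>'"
  shows "(\<integral>\<^sup>+\<omega>. ennreal ((norm (prox D r (\<alpha> t)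
              (sgd_iter D r G \<alpha> x0 \<xi> t - \<alpha> t *\<^sub>R G (sgd_iter D r G \<alpha> x0 \<xi> t) \<omega>)
            - moreau_argmin f D r \<rho>' (sgd_iter D r G \<alpha> x0 \<xi> t)))\<^sup>2) \<partial>M)
     \<le> ennreal ((norm (sgd_iter D r G \<alpha> x0 \<xi> t - moreau_argmin f D r \<rho>' (sgd_iter D r G \<alpha> x0 \<xi> t)))\<^sup>2
          + 4 * (\<alpha> t)\<^sup>2 * L\<^sup>2
          - 2 * \<alpha> t * (\<rho>' - \<rho>) * (norm (sgd_iter D r G \<alpha> x0 \<xi> t - moreau_argmin f D r \<rho>' (sgd_iter D r G \<alpha> x0 \<xi> t)))\<^sup>2)"
proof -
  have Dc: "convex D" and rc: "convex_on D r" using r_pcc unfolding proper_closed_convex_def by auto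
  have xD: "sgd_iter D r G \<alpha> x0 \<xi> n \<in> D" for n
  proof (induction n)
    case 0 then show ?case using x0_in by simp
  next
    case (Suc n) then show ?case using prox_props[OF r_pcc alpha_pos] by (simp add: Let_def)
  qed
  define x where "x = sgd_iter D r G \<alpha> x0 \<xi> t"
  define a where "a = \<alpha> t"
  define xh where "xh = moreau_argmin f D r \<rho>' x"
  have x_D: "x \<in> D" unfolding x_def by (rule xD)
  have a0: "a > 0" unfolding a_def by (rule alpha_pos)
  have a1: "a \<le> 1 / \<rho>'" unfolding a_def by (rule alpha_le)
  have xh: "xh \<in> D" "\<And>w. w \<in> D \<Longrightarrow> f xh + r xh + \<rho>' / 2 * (norm (xh - x))\<^sup>2 \<le> f w + r w + \<rho>' / 2 * (norm (w - x))\<^sup>2"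
    using moreau_props[OF rho_pos f_wc r_pcc rho'_gt, of x] unfolding xh_def by auto
  define g where "g = G x"
  have gi: "integrable M g" unfolding g_def using A2_int D_sub_U x_D by auto
  define v where "v = (\<integral>\<omega>. g \<omega> \<partial>M)"
  have mb: "integrable M (\<lambda>\<omega>. (norm (g \<omega>))\<^sup>2)" "(\<integral>\<omega>. (norm (g \<omega>))\<^sup>2 \<partial>M) \<le> L\<^sup>2"
    using mean_bound[OF A1 gi _ L_nonneg] A3[OF x_D] unfolding g_def by auto
  have W: "\<exists>u. norm u \<le> L \<and> (\<forall>z. f z \<ge> f y + inner u (z - y) - \<rho> / 2 * (norm (z - y))\<^sup>2)" if y: "y \<in> D" for y
  proof (intro exI conjI allI)
    have yU: "y \<in> U" using y D_sub_U by auto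
    show "norm (\<integral>\<omega>. G y \<omega> \<partial>M) \<le> L"
      using mean_bound(3)[OF A1 A2_int[OF yU] A3[OF y] L_nonneg] .
    fix z show "f z \<ge> f y + inner (\<integral>\<omega>. G y \<omega> \<partial>M) (z - y) - \<rho> / 2 * (norm (z - y))\<^sup>2"
      using subgrad_global[OF f_wc _ A2[OF yU]] rho_pos by simp
  qed
  have vW: "f z \<ge> f x + inner v (z - x) - \<rho> / 2 * (norm (z - x))\<^sup>2" for z
    using subgrad_global[OF f_wc _ A2, of x z] rho_pos D_sub_U x_D unfolding v_def g_def by auto
  define xp where "xp \<omega> = prox D r a (x - a *\<^sub>R g \<omega>)" for \<omega>
  define Cc where "Cc = (1 - a * \<rho>')\<^sup>2 + 2 * a * \<rho> * (1 - a * \<rho>')"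
  define B where "B \<omega> = Cc * (norm (xh - x))\<^sup>2 + 2 * a * (1 - a * \<rho>') * inner (xh - x) (g \<omega> - v)
       + 2 * a\<^sup>2 * (L\<^sup>2 + (norm (g \<omega>))\<^sup>2)" for \<omega>
  have pw: "(norm (xp \<omega> - xh))\<^sup>2 \<le> B \<omega>" for \<omega>
  proof -
    have pp: "xp \<omega> \<in> D" "\<And>w. w \<in> D \<Longrightarrow> r (xp \<omega>) + 1 / (2 * a) * (norm (xp \<omega> - (x - a *\<^sub>R g \<omega>)))\<^sup>2
            \<le> r w + 1 / (2 * a) * (norm (w - (x - a *\<^sub>R g \<omega>)))\<^sup>2"
      using prox_props[OF r_pcc a0, of "x - a *\<^sub>R g \<omega>"] unfolding xp_def by auto
    have vi: "r w - r (xp \<omega>) \<ge> (1 / a) * inner ((x - a *\<^sub>R g \<omega>) - xp \<omega>) (w - xp \<omega>)" if w: "w \<in> D" for w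
    proof (rule var_ineq[OF rc pp(1) _ _ w])
      show "1 / a > 0" using a0 by simp
      fix y assume "y \<in> D"
      then show "r (xp \<omega>) + 1 / a / 2 * (norm (xp \<omega> - (x - a *\<^sub>R g \<omega>)))\<^sup>2
            \<le> r y + 1 / a / 2 * (norm (y - (x - a *\<^sub>R g \<omega>)))\<^sup>2" using pp(2)[OF \<open>y \<in> D\<close>] by (simp add: mult.commute)
    qed
    show ?thesis unfolding B_def Cc_def
      by (rule pointwise[OF Dc rc xh(1) pp(1) a0 rho_pos rho'_gt rho'_le a1 xh(2) vi W vW]) auto
  qed
  interpret prob_space M by (rule A1)
  define dd where "dd = (norm (xh - x))\<^sup>2"
  define E where "E = (\<integral>\<omega>. (norm (g \<omega>))\<^sup>2 \<partial>M)"
  have ig: "integrable M (\<lambda>\<omega>. inner (xh - x) (g \<omega> - v))"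
    using gi by (simp add: inner_diff_right)
  have I1: "(\<integral>\<omega>. inner (xh - x) (g \<omega> - v) \<partial>M) = 0"
  proof -
    have "(\<integral>\<omega>. inner (xh - x) (g \<omega> - v) \<partial>M) = (\<integral>\<omega>. inner (xh - x) (g \<omega>) - inner (xh - x) v \<partial>M)"
      by (simp add: inner_diff_right)
    also have "\<dots> = (\<integral>\<omega>. inner (xh - x) (g \<omega>) \<partial>M) - inner (xh - x) v"
      using gi by (subst Bochner_Integration.integral_diff) (auto simp: prob_space)
    also have "\<dots> = 0" using gi unfolding v_def by simp
    finally show ?thesis .
  qed
  have Bi: "integrable M B"
    unfolding B_def using ig mb(1) by (intro Bochner_Integration.integrable_add Bochner_Integration.integrable_mult_right integrable_const) auto
  have BI: "(\<integral>\<omega>. B \<omega> \<partial>M) = Cc * dd + 2 * a\<^sup>2 * (L\<^sup>2 + E)"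
  proof -
    have "(\<integral>\<omega>. B \<omega> \<partial>M) = (\<integral>\<omega>. Cc * dd + 2 * a * (1 - a * \<rho>') * inner (xh - x) (g \<omega> - v) \<partial>M)
        + (\<integral>\<omega>. 2 * a\<^sup>2 * (L\<^sup>2 + (norm (g \<omega>))\<^sup>2) \<partial>M)"
      unfolding B_def dd_def using ig mb(1) by (intro Bochner_Integration.integral_add) auto
    also have "(\<integral>\<omega>. Cc * dd + 2 * a * (1 - a * \<rho>') * inner (xh - x) (g \<omega> - v) \<partial>M) = Cc * dd"
      using ig I1 by (subst Bochner_Integration.integral_add) (auto simp: prob_space)
    also have "(\<integral>\<omega>. 2 * a\<^sup>2 * (L\<^sup>2 + (norm (g \<omega>))\<^sup>2) \<partial>M) = 2 * a\<^sup>2 * (L\<^sup>2 + E)"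
    proof -
      have "(\<integral>\<omega>. 2 * a\<^sup>2 * (L\<^sup>2 + (norm (g \<omega>))\<^sup>2) \<partial>M) = 2 * a\<^sup>2 * (\<integral>\<omega>. L\<^sup>2 + (norm (g \<omega>))\<^sup>2 \<partial>M)"
        by (rule integral_mult_right_zero)
      also have "(\<integral>\<omega>. L\<^sup>2 + (norm (g \<omega>))\<^sup>2 \<partial>M) = L\<^sup>2 + E"
        unfolding E_def using mb(1) by (subst Bochner_Integration.integral_add) (auto simp: prob_space)
      finally show ?thesis .
    qed
    finally show ?thesis .
  qed
  have B0: "AE \<omega> in M. 0 \<le> B \<omega>" using pw by (auto intro: order_trans[OF zero_le_power2])
  have Cc: "Cc = 1 - 2 * a * (\<rho>' - \<rho>) + a\<^sup>2 * \<rho>' * (\<rho>' - 2 * \<rho>)"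
    unfolding Cc_def by (simp add: algebra_simps power2_eq_square)
  have "a\<^sup>2 * \<rho>' * (\<rho>' - 2 * \<rho>) \<le> 0"
    using rho'_le rho'_gt rho_pos by (intro mult_nonneg_nonpos) auto
  then have Ccle: "Cc * dd \<le> (1 - 2 * a * (\<rho>' - \<rho>)) * dd"
    unfolding Cc by (intro mult_right_mono) (auto simp: dd_def)
  have Ele: "E \<le> L\<^sup>2" unfolding E_def by (rule mb(2))
  have fin: "Cc * dd + 2 * a\<^sup>2 * (L\<^sup>2 + E) \<le> dd + 4 * a\<^sup>2 * L\<^sup>2 - 2 * a * (\<rho>' - \<rho>) * dd"
  proof -
    have "2 * a\<^sup>2 * (L\<^sup>2 + E) \<le> 2 * a\<^sup>2 * (L\<^sup>2 + L\<^sup>2)" using Ele by (intro mult_left_mono) auto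
    then show ?thesis using Ccle by (simp add: algebra_simps)
  qed
  have "(\<integral>\<^sup>+\<omega>. ennreal ((norm (xp \<omega> - xh))\<^sup>2) \<partial>M) \<le> (\<integral>\<^sup>+\<omega>. ennreal (B \<omega>) \<partial>M)"
    using pw by (intro nn_integral_mono ennreal_leI) auto
  also have "\<dots> = ennreal (\<integral>\<omega>. B \<omega> \<partial>M)" by (rule nn_integral_eq_integral[OF Bi B0])
  also have "\<dots> \<le> ennreal (dd + 4 * a\<^sup>2 * L\<^sup>2 - 2 * a * (\<rho>' - \<rho>) * dd)"
    unfolding BI using fin by (rule ennreal_leI)
  finally have main: "(\<integral>\<^sup>+\<omega>. ennreal ((norm (xp \<omega> - xh))\<^sup>2) \<partial>M) \<le> ennreal (dd + 4 * a\<^sup>2 * L\<^sup>2 - 2 * a * (\<rho>' - \<rho>) * dd)" .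
  have ddx: "dd = (norm (x - xh))\<^sup>2" unfolding dd_def by (simp add: norm_minus_commute)
  show ?thesis using main unfolding ddx xp_def g_def xh_def a_def x_def by simp
qed

end
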